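(* Let $\rho$ be a density matrix on $\mathcal F$ (positive, trace one) that commutes with the particle number operator $\hat{\mathbb N}=\sum_{i=1}^n c_i^*c_i$, where $c_i=c(\varphi_i)$. Define the numbers $\gamma_{ij}\doteq\operatorname{tr}(\rho\,c_j^*c_i)$ for $i,j\in\mathbb N_n$, and put $\operatorname{tr}\gamma=\sum_i\gamma_{ii}$ and $d\Gamma(\gamma)=\sum_{i,j}\gamma_{ij}c_i^*c_j$. Let $\pi_1$ be the orthogonal projection in $\mathcal L^2(\mathcal F)$ onto $\mathcal O_1$. Then $$2^n\pi_1(\rho)=(n+1-2\operatorname{tr}\gamma)\mathbb 1-2\hat{\mathbb N}+4\,d\Gamma(\gamma).$$
   Context: Let $\mathfrak h$ be a complex Hilbert space of finite dimension $n$ with orthonormal basis $\varphi_1,\dots,\varphi_n$, and $\mathbb N_n=\{1,\dots,n\}$. $\mathcal F=\bigoplus_{k=0}^n\bigwedge^k\mathfrak h$ is the fermion Fock space with the determinant inner product. The creation operators are $c^*(f)\omega=f\wedge\omega$, and $c(f)=c^*(f)^*$. $\mathcal L^2(\mathcal F)$ is the space of all linear operators on $\mathcal F$ with inner product $\langle a,b\rangle=\operatorname{tr}(a^*b)$. For $\omega\in\mathcal F$ let $\mathbf c^*(\omega)\xi=\omega\wedge\xi$ and $\mathbf c(\omega)=\mathbf c^*(\omega)^*$. The space $\mathcal O_1$ of one-body operators is the linear span of the operators $\mathbf c^*(\omega)\mathbf c(\eta)$ with $\omega\in\bigwedge^r\mathfrak h$, $\eta\in\bigwedge^s\mathfrak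 h$ and $r+s\in\{0,2\}$. Equivalently, it is the span of $\mathbb 1$, $c_i^*c_j$, $c_i^*c_j^*$ and $c_ic_j$ for $i,j\in\mathbb N_n$. *)

theory Defs
  imports Complex_Main
begin

text \<open>Concrete model of the fermion Fock space over h = C^n with orthonormal basis
  phi_1..phi_n.  The Fock space F has orthonormal basis e_S, S \<subseteq> {1..n}, where
  e_S = phi_{s1} \<and> ... \<and> phi_{sk} with s1 < ... < sk.  A linear operator A on F is
  represented by its matrix entries A S T = <e_S, A e_T> (zero outside Pow {1..n}).\<close>

type_synonym fop = "nat set \<Rightarrow> nat set \<Rightarrow> complex"

definition fock_op :: "nat \<Rightarrow> fop \<Rightarrow> bool" where
  "fock_op n A \<longleftrightarrow> (\<forall>S T. A S T \<noteq> 0 \<longrightarrow> S \<subseteq> {1..n} \<and> T \<subseteq> {1..n})"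

definition fmult :: "nat \<Rightarrow> fop \<Rightarrow> fop \<Rightarrow> fop" where
  "fmult n A B = (\<lambda>S T. \<Sum>U\<in>Pow {1..n}. A S U * B U T)"

definition fadj :: "fop \<Rightarrow> fop" where
  "fadj A = (\<lambda>S T. cnj (A T S))"

definition ftr :: "nat \<Rightarrow> fop \<Rightarrow> complex" where
  "ftr n A = (\<Sum>S\<in>Pow {1..n}. A S S)"

definition hs_inner :: "nat \<Rightarrow> fop \<Rightarrow> fop \<Rightarrow> complex" where
  "hs_inner n A B = ftr n (fmult n (fadj A) B)"

definition fid :: "nat \<Rightarrow> fop" where
  "fid n = (\<lambda>S T. if S = T \<and> S \<subseteq> {1..n} then 1 else 0)"

text \<open>Creation operator c_i^* = c^*(phi_i): c_i^* e_T = phi_i \<and> e_T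
  = (-1)^{#{j \<in> T. j < i}} e_{T \<union> {i}} if i \<notin> T, and 0 otherwise.\<close>
definition cre :: "nat \<Rightarrow> nat \<Rightarrow> fop" where
  "cre n i = (\<lambda>S T. if T \<subseteq> {1..n} \<and> i \<in> {1..n} \<and> i \<notin> T \<and> S = insert i T
                    then (-1) ^ card {j\<in>T. j < i} else 0)"

definition ann :: "nat \<Rightarrow> nat \<Rightarrow> fop" where
  "ann n i = fadj (cre n i)"

definition numop :: "nat \<Rightarrow> fop" where
  "numop n = (\<lambda>S T. \<Sum>i\<in>{1..n}. fmult n (cre n i) (ann n i) S T)"

definition O1 :: "nat \<Rightarrow> fop set" where
  "O1 n = {(\<lambda>S T. a * fid n S T
             + (\<Sum>i\<in>{1..n}. \<Sum>j\<in>{1..n}. b i j * fmult n (cre n i) (ann n j) S T)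
             + (\<Sum>i\<in>{1..n}. \<Sum>j\<in>{1..n}. d i j * fmult n (cre n i) (cre n j) S T)
             + (\<Sum>i\<in>{1..n}. \<Sum>j\<in>{1..n}. e i j * fmult n (ann n i) (ann n j) S T))
          | a b d e. True}"

definition orth_proj :: "nat \<Rightarrow> fop set \<Rightarrow> fop \<Rightarrow> fop" where
  "orth_proj n V x = (THE p. p \<in> V \<and> (\<forall>y\<in>V. hs_inner n y (\<lambda>S T. x S T - p S T) = 0))"

definition density_matrix :: "nat \<Rightarrow> fop \<Rightarrow> bool" where
  "density_matrix n \<rho> \<longleftrightarrow> fock_op n \<rho> \<and>
     (\<forall>v :: nat set \<Rightarrow> complex.
        (\<Sum>S\<in>Pow {1..n}. \<Sum>T\<in>Pow {1..n}. cnj (v S) * \<rho> S T * v T) \<in> \<real> \<and>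
        0 \<le> Re (\<Sum>S\<in>Pow {1..n}. \<Sum>T\<in>Pow {1..n}. cnj (v S) * \<rho> S T * v T)) \<and>
     ftr n \<rho> = 1"

end

theory Submission
  imports Defs
begin


lemma cre_nz: "cre n i S T \<noteq> 0 \<Longrightarrow> T \<subseteq> {1..n} \<and> i \<in> {1..n} \<and> i \<notin> T \<and> S = insert i T"
  by (simp add: cre_def split: if_splits)

lemma E_formula: "fmult n (cre n i) (ann n j) S T =
  (if S \<subseteq> {1..n} \<and> T \<subseteq> {1..n} \<and> i \<in> S \<and> j \<in> T \<and> S - {i} = T - {j}
   then (-1) ^ (card {x\<in>S-{i}. x<i} + card {x\<in>S-{i}. x<j}) else 0)"
proof -
  have "fmult n (cre n i) (ann n j) S T = (\<Sum>U\<in>Pow {1..n}. cre n i S U * cnj (cre n j T U))"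
    by (simp add: fmult_def ann_def fadj_def)
  also have "\<dots> = (\<Sum>U\<in>Pow {1..n}. if U = S - {i} then cre n i S U * cnj (cre n j T U) else 0)"
  proof (rule sum.cong)
    fix U assume "U \<in> Pow {1..n}"
    show "cre n i S U * cnj (cre n j T U) = (if U = S - {i} then cre n i S U * cnj (cre n j T U) else 0)"
    proof (cases "cre n i S U = 0")
      case False then have "U = S - {i}" using cre_nz[OF False] by auto
      then show ?thesis by simp
    qed auto
  qed simp
  also have "\<dots> = (if S - {i} \<in> Pow {1..n} then cre n i S (S-{i}) * cnj (cre n j T (S-{i})) else 0)"
    by (simp add: sum.delta')
  also have "\<dots> = (if S \<subseteq> {1..n} \<and> T \<subseteq> {1..n} \<and> i \<in> S \<and> j \<in> T \<and> S - {i} = T - {j}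
   then (-1) ^ (card {x\<in>S-{i}. x<i} + card {x\<in>S-{i}. x<j}) else 0)"
    by (auto simp: cre_def power_add)
  finally show ?thesis .
qed

lemma ann_nz: "ann n i S T \<noteq> 0 \<Longrightarrow> S \<subseteq> {1..n} \<and> i \<in> {1..n} \<and> i \<notin> S \<and> T = insert i S"
  by (simp add: ann_def fadj_def cre_def split: if_splits)

lemma neg1_double: "(-1::complex) ^ (k + k) = 1"
  by (simp add: power_add flip: power_mult_distrib)

lemma E_diag: "fmult n (cre n i) (ann n i) S T = (if S = T \<and> S \<subseteq> {1..n} \<and> i \<in> S then 1 else 0)"
  unfolding E_formula by (auto simp: neg1_double)

lemma E_nz: "fmult n (cre n i) (ann n j) S T \<noteq> 0 \<Longrightarrow>
   S \<subseteq> {1..n} \<and> T \<subseteq> {1..n} \<and> i \<in> S \<and> j \<in> T \<and> S - {i} = T - {j}"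
  unfolding E_formula by (auto split: if_splits)

lemma E_card: "fmult n (cre n i) (ann n j) S T \<noteq> 0 \<Longrightarrow> card S = card T"
proof -
  assume "fmult n (cre n i) (ann n j) S T \<noteq> 0"
  from E_nz[OF this] have h: "S \<subseteq> {1..n}" "T \<subseteq> {1..n}" "i \<in> S" "j \<in> T" "S - {i} = T - {j}" by auto
  have fS: "finite S" and fT: "finite T" using h(1,2) finite_subset[OF _ finite_atLeastAtMost] by auto
  have a: "card S = Suc (card (S - {i}))" using card.remove[OF fS h(3)] .
  have b: "card T = Suc (card (T - {j}))" using card.remove[OF fT h(4)] .
  show ?thesis unfolding a b h(5) ..
qed

lemma E_offdiag: "i \<noteq> j \<Longrightarrow> fmult n (cre n i) (ann n j) S S = 0"
  unfolding E_formula by auto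

lemma E_sym: "fmult n (cre n i) (ann n j) S T = fmult n (cre n j) (ann n i) T S"
proof (cases "S \<subseteq> {1..n} \<and> T \<subseteq> {1..n} \<and> i \<in> S \<and> j \<in> T \<and> S - {i} = T - {j}")
  case True
  then have "T - {j} = S - {i}" by simp
  then show ?thesis unfolding E_formula using True by (simp add: add.commute)
next
  case False
  then have "\<not> (T \<subseteq> {1..n} \<and> S \<subseteq> {1..n} \<and> j \<in> T \<and> i \<in> S \<and> T - {j} = S - {i})" by auto
  then show ?thesis unfolding E_formula using False by (simp only: if_False)
qed

lemma E_real: "cnj (fmult n (cre n i) (ann n j) S T) = fmult n (cre n i) (ann n j) S T"
  unfolding E_formula by auto

lemma numop_formula: "numop n S T = (if S = T \<and> S \<subseteq> {1..n} then of_nat (card S) else 0)"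
proof -
  have "numop n S T = (\<Sum>i\<in>{1..n}. if S = T \<and> S \<subseteq> {1..n} \<and> i \<in> S then 1 else 0)"
    by (simp add: numop_def E_diag)
  also have "\<dots> = (if S = T \<and> S \<subseteq> {1..n} then of_nat (card S) else 0)"
  proof (cases "S = T \<and> S \<subseteq> {1..n}")
    case True
    then have "(\<Sum>i\<in>{1..n}. if S = T \<and> S \<subseteq> {1..n} \<and> i \<in> S then 1 else 0)
       = (\<Sum>i\<in>{1..n}. if i \<in> S then 1 else (0::complex))" by (intro sum.cong) auto
    also have "\<dots> = of_nat (card ({1..n} \<inter> S))"
      by (simp add: sum.If_cases)
    also have "{1..n} \<inter> S = S" using True by auto
    finally show ?thesis using True by auto
  next
    case False
    then have "\<And>i. \<not> (S = T \<and> S \<subseteq> {1..n} \<and> i \<in> S)" by blast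
    then show ?thesis using False by (simp only: if_False sum.neutral_const)
  qed
  finally show ?thesis .
qed

lemma cc_card: "fmult n (cre n i) (cre n j) S T \<noteq> 0 \<Longrightarrow> card S = card T + 2"
proof -
  assume "fmult n (cre n i) (cre n j) S T \<noteq> 0"
  then obtain U where "cre n i S U \<noteq> 0" "cre n j U T \<noteq> 0"
    unfolding fmult_def by (rule sum.not_neutral_contains_not_neutral) auto
  from cre_nz[OF this(1)] cre_nz[OF this(2)] have h: "T \<subseteq> {1..n}" "j \<notin> T" "i \<notin> U" "U = insert j T" "S = insert i U" by auto
  have "finite T" using h(1) finite_subset by blast
  then show ?thesis using h by simp
qed

lemma aa_card: "fmult n (ann n i) (ann n j) S T \<noteq> 0 \<Longrightarrow> card T = card S + 2"
proof -
  assume "fmult n (ann n i) (ann n j) S T \<noteq> 0"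
  then obtain U where "ann n i S U \<noteq> 0" "ann n j U T \<noteq> 0"
    unfolding fmult_def by (rule sum.not_neutral_contains_not_neutral) auto
  from ann_nz[OF this(1)] ann_nz[OF this(2)] have h: "S \<subseteq> {1..n}" "i \<notin> S" "j \<notin> U" "U = insert i S" "T = insert j U" by auto
  have "finite S" using h(1) finite_subset by blast
  then show ?thesis using h by simp
qed

lemma cc_fock: "fmult n (cre n i) (cre n j) S T \<noteq> 0 \<Longrightarrow> S \<subseteq> {1..n} \<and> T \<subseteq> {1..n}"
proof -
  assume "fmult n (cre n i) (cre n j) S T \<noteq> 0"
  then obtain U where "cre n i S U \<noteq> 0" "cre n j U T \<noteq> 0"
    unfolding fmult_def by (rule sum.not_neutral_contains_not_neutral) auto
  from cre_nz[OF this(1)] cre_nz[OF this(2)] have h: "T \<subseteq> {1..n}" "i \<in> {1..n}" "j \<in> {1..n}" "U = insert j T" "S = insert i U" by blast+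
  then show ?thesis by simp
qed

lemma aa_fock: "fmult n (ann n i) (ann n j) S T \<noteq> 0 \<Longrightarrow> S \<subseteq> {1..n} \<and> T \<subseteq> {1..n}"
proof -
  assume "fmult n (ann n i) (ann n j) S T \<noteq> 0"
  then obtain U where "ann n i S U \<noteq> 0" "ann n j U T \<noteq> 0"
    unfolding fmult_def by (rule sum.not_neutral_contains_not_neutral) auto
  from ann_nz[OF this(1)] ann_nz[OF this(2)] have h: "S \<subseteq> {1..n}" "i \<in> {1..n}" "j \<in> {1..n}" "U = insert i S" "T = insert j U" by blast+
  then show ?thesis by simp
qed



lemma card_sub: "finite A \<Longrightarrow> B \<subseteq> A \<Longrightarrow> C \<subseteq> A \<Longrightarrow> B \<inter> C = {} \<Longrightarrow>
  card {S \<in> Pow A. B \<subseteq> S \<and> S \<inter> C = {}} = 2 ^ (card A - card B - card C)"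
proof -
  assume f: "finite A" and b: "B \<subseteq> A" and c: "C \<subseteq> A" and bc: "B \<inter> C = {}"
  have eq: "{S \<in> Pow A. B \<subseteq> S \<and> S \<inter> C = {}} = (\<lambda>U. B \<union> U) ` Pow (A - B - C)"
  proof
    show "{S \<in> Pow A. B \<subseteq> S \<and> S \<inter> C = {}} \<subseteq> (\<lambda>U. B \<union> U) ` Pow (A - B - C)"
    proof
      fix S assume "S \<in> {S \<in> Pow A. B \<subseteq> S \<and> S \<inter> C = {}}"
      then have "S = B \<union> (S - B)" "S - B \<in> Pow (A - B - C)" by auto
      then show "S \<in> (\<lambda>U. B \<union> U) ` Pow (A - B - C)" by blast
    qed
    show "(\<lambda>U. B \<union> U) ` Pow (A - B - C) \<subseteq> {S \<in> Pow A. B \<subseteq> S \<and> S \<inter> C = {}}"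
      using b bc by auto
  qed
  have inj: "inj_on (\<lambda>U. B \<union> U) (Pow (A - B - C))"
  proof (rule inj_onI)
    fix U V assume "U \<in> Pow (A - B - C)" "V \<in> Pow (A - B - C)" "B \<union> U = B \<union> V"
    then show "U = V" by blast
  qed
  have "card (A - B - C) = card A - card B - card C"
  proof -
    have "card (A - B) = card A - card B" using f b by (simp add: card_Diff_subset finite_subset)
    moreover have "C \<subseteq> A - B" using c bc by auto
    ultimately show ?thesis using f c by (simp add: card_Diff_subset finite_subset)
  qed
  then show ?thesis unfolding eq using card_image[OF inj] f by (simp add: card_Pow)
qed

lemma sum_ind: "finite A \<Longrightarrow> (\<Sum>S\<in>Pow A. if P S then 1 else 0 :: complex) = of_nat (card {S \<in> Pow A. P S})"
  by (simp add: sum.If_cases Int_def conj_commute)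

lemma sumP0: "(\<Sum>S\<in>Pow {1..n}. 1 :: complex) = 2 ^ n"
  by (simp add: card_Pow)

lemma sumP1: "i \<in> {1..n} \<Longrightarrow> (\<Sum>S\<in>Pow {1..(n::nat)}. if i \<in> S then 1 else 0 :: complex) = 2 ^ n / 2"
proof -
  assume i: "i \<in> {1..n}"
  have "{S \<in> Pow {1..n}. i \<in> S} = {S \<in> Pow {1..n}. {i} \<subseteq> S \<and> S \<inter> {} = {}}" by auto
  then have "card {S \<in> Pow {1..n}. i \<in> S} = 2 ^ (n - 1)" using card_sub[of "{1..n}" "{i}" "{}"] i by simp
  moreover have "n \<ge> 1" using i by auto
  ultimately show ?thesis by (simp add: sum_ind) (metis One_nat_def Suc_pred' not_one_le_zero power_Suc gr0I
      nonzero_mult_div_cancel_left zero_neq_numeral mult.commute)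
qed

lemma pow_m2: "2 \<le> n \<Longrightarrow> (2::complex) ^ (n - 2) = 2 ^ n / 4"
proof -
  assume "2 \<le> n" then obtain m where "n = m + 2" by (metis le_add_diff_inverse2)
  then show ?thesis by (simp add: power_add)
qed

lemma two_le: "i \<in> {1..n} \<Longrightarrow> k \<in> {1..(n::nat)} \<Longrightarrow> i \<noteq> k \<Longrightarrow> 2 \<le> n"
proof -
  assume "i \<in> {1..n}" "k \<in> {1..n}" "i \<noteq> k"
  then have "{i,k} \<subseteq> {1..n}" by auto
  then have "card {i,k} \<le> card {1..n}" by (rule card_mono[rotated]) simp
  then show ?thesis using \<open>i \<noteq> k\<close> by simp
qed

lemma sumP2: "i \<in> {1..n} \<Longrightarrow> k \<in> {1..(n::nat)} \<Longrightarrow>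
  (\<Sum>S\<in>Pow {1..n}. (if i \<in> S then 1 else 0) * (if k \<in> S then 1 else 0) :: complex)
   = 2 ^ n / 4 + (if k = i then 2 ^ n / 4 else 0)"
proof (cases "k = i")
  case True
  assume i: "i \<in> {1..n}"
  have "(\<Sum>S\<in>Pow {1..n}. (if i \<in> S then 1 else 0) * (if k \<in> S then 1 else 0) :: complex)
     = (\<Sum>S\<in>Pow {1..n}. if i \<in> S then 1 else 0)" using True by (intro sum.cong) auto
  then show ?thesis using sumP1[OF i] True by simp
next
  case False
  assume i: "i \<in> {1..n}" and k: "k \<in> {1..n}"
  have "(\<Sum>S\<in>Pow {1..n}. (if i \<in> S then 1 else 0) * (if k \<in> S then 1 else 0) :: complex)
     = (\<Sum>S\<in>Pow {1..n}. if {i,k} \<subseteq> S \<and> S \<inter> {} = {} then 1 else 0)" by (intro sum.cong) auto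
  also have "\<dots> = of_nat (2 ^ (n - 2))"
    using card_sub[of "{1..n}" "{i,k}" "{}"] i k False by (simp add: sum_ind numeral_2_eq_2)
  also have "\<dots> = 2 ^ n / 4" using pow_m2[OF two_le[OF k i False]] by simp
  finally show ?thesis using False by simp
qed

lemma sumP3: "i \<in> {1..n} \<Longrightarrow> j \<in> {1..(n::nat)} \<Longrightarrow> i \<noteq> j \<Longrightarrow>
  (\<Sum>S\<in>Pow {1..n}. if i \<in> S \<and> j \<notin> S then 1 else 0 :: complex) = 2 ^ n / 4"
proof -
  assume i: "i \<in> {1..n}" and j: "j \<in> {1..n}" and ij: "i \<noteq> j"
  have "(\<Sum>S\<in>Pow {1..n}. if i \<in> S \<and> j \<notin> S then 1 else 0 :: complex)
     = (\<Sum>S\<in>Pow {1..n}. if {i} \<subseteq> S \<and> S \<inter> {j} = {} then 1 else 0)" by (intro sum.cong) auto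
  also have "\<dots> = of_nat (2 ^ (n - 2))"
    using card_sub[of "{1..n}" "{i}" "{j}"] i j ij by (simp add: sum_ind numeral_2_eq_2)
  also have "\<dots> = 2 ^ n / 4" using pow_m2[OF two_le[OF i j ij]] by simp
  finally show ?thesis .
qed



definition fr :: "nat \<Rightarrow> fop \<Rightarrow> fop \<Rightarrow> complex" where
  "fr n A B = (\<Sum>S\<in>Pow {1..n}. \<Sum>T\<in>Pow {1..n}. cnj (A S T) * B S T)"

lemma hs_fr: "hs_inner n A B = fr n A B"
  unfolding hs_inner_def ftr_def fmult_def fadj_def fr_def by (rule sum.swap)

lemma fr_add: "fr n (\<lambda>S T. A S T + B S T) X = fr n A X + fr n B X"
  unfolding fr_def by (simp add: sum.distrib distrib_right)

lemma fr_scale: "fr n (\<lambda>S T. c * A S T) X = cnj c * fr n A X"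
  unfolding fr_def by (simp add: sum_distrib_left mult.assoc)

lemma fr_sum: "fr n (\<lambda>S T. \<Sum>i\<in>I. A i S T) X = (\<Sum>i\<in>I. fr n (A i) X)"
  unfolding fr_def by (simp add: sum_distrib_right cnj_sum sum.swap[of _ I])

lemma fr_diff2: "fr n A (\<lambda>S T. X S T - Y S T) = fr n A X - fr n A Y"
  unfolding fr_def by (simp add: sum_subtractf right_diff_distrib)

lemma fr_div2: "fr n A (\<lambda>S T. X S T / c) = fr n A X / c"
  unfolding fr_def by (simp add: sum_divide_distrib)

lemma fr_zero: assumes "\<And>S T. cnj (A S T) * X S T = 0" shows "fr n A X = 0"
  unfolding fr_def assms by simp



abbreviation EE :: "nat \<Rightarrow> nat \<Rightarrow> nat \<Rightarrow> fop" where
  "EE n i j \<equiv> fmult n (cre n i) (ann n j)"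

definition RR :: "nat \<Rightarrow> (nat \<Rightarrow> nat \<Rightarrow> complex) \<Rightarrow> complex \<Rightarrow> fop" where
  "RR n g c0 = (\<lambda>S T. c0 * fid n S T - 2 * numop n S T
               + 4 * (\<Sum>i\<in>{1..n}. \<Sum>j\<in>{1..n}. g i j * EE n i j S T))"

lemma E_uniq: "i \<noteq> j \<Longrightarrow> EE n i j S T \<noteq> 0 \<Longrightarrow> EE n k l S T \<noteq> 0 \<Longrightarrow> k = i \<and> l = j"
proof -
  assume ij: "i \<noteq> j" and a: "EE n i j S T \<noteq> 0" and b: "EE n k l S T \<noteq> 0"
  from E_nz[OF a] have h1: "i \<in> S" "j \<in> T" "S - {i} = T - {j}" by auto
  from E_nz[OF b] have h2: "k \<in> S" "l \<in> T" "S - {k} = T - {l}" by auto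
  have iT: "i \<notin> T" using h1 ij by blast
  have "k = i"
  proof (rule ccontr)
    assume "k \<noteq> i"
    then have "i \<in> S - {k}" using h1 by auto
    then have "i \<in> T" using h2 by auto
    then show False using iT by simp
  qed
  moreover have "l = j"
  proof (rule ccontr)
    assume "l \<noteq> j"
    then have "j \<in> T - {l}" using h1 by auto
    then have "j \<in> S - {i}" using h2 \<open>k = i\<close> by auto
    then show False using h1 by auto
  qed
  ultimately show ?thesis by simp
qed

lemma E_sq: "EE n i j S T * EE n i j S T = (if EE n i j S T = 0 then 0 else 1)"
  unfolding E_formula by (auto simp flip: power_add simp: neg1_double)

lemma E_cond: "S \<subseteq> {1..n} \<Longrightarrow> j \<in> {1..n} \<Longrightarrow> i \<noteq> j \<Longrightarrow>
  (EE n i j S T \<noteq> 0) = (i \<in> S \<and> j \<notin> S \<and> T = insert j (S - {i}))"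
  unfolding E_formula by auto

lemma numop_diag: "S \<subseteq> {1..n} \<Longrightarrow> numop n S S = (\<Sum>k\<in>{1..n}. if k \<in> S then 1 else 0)"
proof -
  assume S: "S \<subseteq> {1..n}"
  then have "{1..n} \<inter> S = S" by auto
  then show ?thesis using S by (simp add: numop_formula sum.If_cases)
qed

lemma R_diag: "S \<subseteq> {1..n} \<Longrightarrow>
  RR n g c0 S S = c0 + (\<Sum>k\<in>{1..n}. (4 * g k k - 2) * (if k \<in> S then 1 else 0))"
proof -
  assume S: "S \<subseteq> {1..n}"
  have "(\<Sum>i\<in>{1..n}. \<Sum>j\<in>{1..n}. g i j * EE n i j S S) = (\<Sum>i\<in>{1..n}. g i i * (if i \<in> S then 1 else 0))"
  proof (rule sum.cong)
    fix i assume i: "i \<in> {1..n}"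
    have "(\<Sum>j\<in>{1..n}. g i j * EE n i j S S) = (\<Sum>j\<in>{1..n}. if j = i then g i j * EE n i j S S else 0)"
      by (rule sum.cong) (auto simp: E_offdiag)
    also have "\<dots> = g i i * (if i \<in> S then 1 else 0)" using i S by (simp add: E_diag)
    finally show "(\<Sum>j\<in>{1..n}. g i j * EE n i j S S) = g i i * (if i \<in> S then 1 else 0)" .
  qed simp
  then have eq: "RR n g c0 S S = c0 - 2 * (\<Sum>k\<in>{1..n}. if k \<in> S then 1 else 0)
       + 4 * (\<Sum>i\<in>{1..n}. g i i * (if i \<in> S then 1 else 0))"
    using S by (simp add: RR_def fid_def numop_diag)
  have "(\<Sum>k\<in>{1..n}. (4 * g k k - 2) * (if k \<in> S then 1 else 0))
     = 4 * (\<Sum>i\<in>{1..n}. g i i * (if i \<in> S then 1 else 0)) - 2 * (\<Sum>k\<in>{1..n}. if k \<in> S then 1 else (0::complex))"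
    by (simp add: left_diff_distrib sum_subtractf sum_distrib_left mult.assoc)
  then show ?thesis using eq by simp
qed

lemma R_off: "i \<noteq> j \<Longrightarrow> EE n i j S T \<noteq> 0 \<Longrightarrow> RR n g c0 S T = 4 * g i j * EE n i j S T"
proof -
  assume ij: "i \<noteq> j" and a: "EE n i j S T \<noteq> 0"
  from E_nz[OF a] have h: "S \<subseteq> {1..n}" "T \<subseteq> {1..n}" "i \<in> S" "j \<in> T" "S - {i} = T - {j}" by auto
  have "S \<noteq> T" using h ij by blast
  then have z: "fid n S T = 0" "numop n S T = 0" by (auto simp: fid_def numop_formula)
  define v where "v = g i j * EE n i j S T"
  have pw: "g k l * EE n k l S T = (if k = i then (if l = j then v else 0) else 0)" for k l
    unfolding v_def by (cases "EE n k l S T = 0") (auto dest: E_uniq[OF ij a])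
  have ij1: "i \<in> {1..n}" "j \<in> {1..n}" using h by auto
  have "(\<Sum>k\<in>{1..n}. \<Sum>l\<in>{1..n}. g k l * EE n k l S T) = v"
  proof -
    have "(\<Sum>l\<in>{1..n}. if k = i then (if l = j then v else 0) else 0) = (if k = i then v else 0)" for k
      using ij1 by (cases "k = i") simp_all
    then show ?thesis unfolding pw using ij1 by simp
  qed
  then have "(\<Sum>k\<in>{1..n}. \<Sum>l\<in>{1..n}. g k l * EE n k l S T) = g i j * EE n i j S T"
    unfolding v_def .
  then show ?thesis by (simp add: RR_def z)
qed

lemma R_card: "RR n g c0 S T \<noteq> 0 \<Longrightarrow> card S = card T"
proof (rule ccontr)
  assume a: "RR n g c0 S T \<noteq> 0" and c: "card S \<noteq> card T"
  then have "S \<noteq> T" by auto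
  then have z: "fid n S T = 0" "numop n S T = 0" by (auto simp: fid_def numop_formula)
  have "\<And>k l. EE n k l S T = 0" using E_card c by blast
  then have "RR n g c0 S T = 0" by (simp add: RR_def z)
  then show False using a by simp
qed

lemma R_fock: "RR n g c0 S T \<noteq> 0 \<Longrightarrow> S \<subseteq> {1..n} \<and> T \<subseteq> {1..n}"
proof (rule ccontr)
  assume a: "RR n g c0 S T \<noteq> 0" and c: "\<not> (S \<subseteq> {1..n} \<and> T \<subseteq> {1..n})"
  then have z: "fid n S T = 0" "numop n S T = 0" by (auto simp: fid_def numop_formula)
  have "\<And>k l. EE n k l S T = 0" using E_nz c by blast
  then have "RR n g c0 S T = 0" by (simp add: RR_def z)
  then show False using a by simp
qed

lemma fr_E_R: "i \<in> {1..n} \<Longrightarrow> j \<in> {1..n} \<Longrightarrow> i \<noteq> j \<Longrightarrow> fr n (EE n i j) (RR n g c0) = 2 ^ n * g i j"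
proof -
  assume i: "i \<in> {1..n}" and j: "j \<in> {1..n}" and ij: "i \<noteq> j"
  have pt: "cnj (EE n i j S T) * RR n g c0 S T = 4 * g i j * (if EE n i j S T = 0 then 0 else 1)" for S T
  proof (cases "EE n i j S T = 0")
    case False
    have "cnj (EE n i j S T) * RR n g c0 S T = 4 * g i j * (EE n i j S T * EE n i j S T)"
      by (simp only: E_real R_off[OF ij False]) (simp add: algebra_simps)
    then show ?thesis using False by (simp only: E_sq)
  qed (simp add: E_real)
  have "fr n (EE n i j) (RR n g c0) = (\<Sum>S\<in>Pow {1..n}. \<Sum>T\<in>Pow {1..n}. 4 * g i j * (if EE n i j S T = 0 then 0 else 1))"
    unfolding fr_def pt ..
  also have "\<dots> = (\<Sum>S\<in>Pow {1..n}. 4 * g i j * (if i \<in> S \<and> j \<notin> S then 1 else 0))"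
  proof (rule sum.cong[OF refl])
    fix S assume S: "S \<in> Pow {1..n}"
    have "(\<Sum>T\<in>Pow {1..n}. 4 * g i j * (if EE n i j S T = 0 then 0 else 1))
       = (\<Sum>T\<in>Pow {1..n}. if T = insert j (S - {i}) then (if i \<in> S \<and> j \<notin> S then 4 * g i j else 0) else 0)"
    proof (rule sum.cong[OF refl])
      fix T
      have c: "(EE n i j S T = 0) = (\<not> (i \<in> S \<and> j \<notin> S \<and> T = insert j (S - {i})))"
        using E_cond[of S n j i T] S j ij by blast
      show "4 * g i j * (if EE n i j S T = 0 then 0 else 1)
        = (if T = insert j (S - {i}) then (if i \<in> S \<and> j \<notin> S then 4 * g i j else 0) else 0)"
        unfolding c by auto
    qed
    also have "\<dots> = 4 * g i j * (if i \<in> S \<and> j \<notin> S then 1 else 0)"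
      using S j by (auto simp: sum.delta')
    finally show "(\<Sum>T\<in>Pow {1..n}. 4 * g i j * (if EE n i j S T = 0 then 0 else 1))
       = 4 * g i j * (if i \<in> S \<and> j \<notin> S then 1 else 0)" .
  qed
  also have "\<dots> = 4 * g i j * (\<Sum>S\<in>Pow {1..n}. if i \<in> S \<and> j \<notin> S then 1 else 0)"
    by (simp add: sum_distrib_left)
  also have "\<dots> = 4 * g i j * (2 ^ n / 4)" unfolding sumP3[OF i j ij] ..
  finally show ?thesis by simp
qed

lemma sum_lin1: "i \<in> {1..n} \<Longrightarrow>
  (\<Sum>S\<in>Pow {1..n}. (if i \<in> S then 1 else 0) * (c0 + (\<Sum>k\<in>{1..n}. w k * (if k \<in> S then 1 else 0))))
  = c0 * (2 ^ n / 2) + (\<Sum>k\<in>{1..n}. w k) * (2 ^ n / 4) + w i * (2 ^ n / 4 :: complex)"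
proof -
  assume i: "i \<in> {1..n}"
  have "(\<Sum>S\<in>Pow {1..n}. (if i \<in> S then 1 else 0) * (c0 + (\<Sum>k\<in>{1..n}. w k * (if k \<in> S then 1 else 0))))
     = c0 * (\<Sum>S\<in>Pow {1..n}. (if i \<in> S then 1 else 0))
       + (\<Sum>S\<in>Pow {1..n}. \<Sum>k\<in>{1..n}. w k * ((if i \<in> S then 1 else 0) * (if k \<in> S then 1 else 0)))"
    by (simp add: distrib_left sum.distrib sum_distrib_left algebra_simps)
  also have "(\<Sum>S\<in>Pow {1..n}. \<Sum>k\<in>{1..n}. w k * ((if i \<in> S then 1 else 0) * (if k \<in> S then 1 else 0)))
     = (\<Sum>k\<in>{1..n}. w k * (\<Sum>S\<in>Pow {1..n}. (if i \<in> S then 1 else 0) * (if k \<in> S then 1 else (0::complex))))"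
    by (subst sum.swap) (simp add: sum_distrib_left)
  also have "\<dots> = (\<Sum>k\<in>{1..n}. w k * (2 ^ n / 4 + (if k = i then 2 ^ n / 4 else 0)))"
  proof (rule sum.cong[OF refl])
    fix k assume k: "k \<in> {1..n}"
    show "w k * (\<Sum>S\<in>Pow {1..n}. (if i \<in> S then 1 else 0) * (if k \<in> S then 1 else (0::complex)))
        = w k * (2 ^ n / 4 + (if k = i then 2 ^ n / 4 else 0))" unfolding sumP2[OF i k] ..
  qed
  also have "\<dots> = (\<Sum>k\<in>{1..n}. w k) * (2 ^ n / 4) + w i * (2 ^ n / 4)"
    using i by (simp add: distrib_left sum.distrib sum_distrib_right if_distrib[of "\<lambda>x. w _ * x"] cong: if_cong)
  finally show ?thesis unfolding sumP1[OF i] by simp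
qed

lemma sum_lin0:
  "(\<Sum>S\<in>Pow {1..n}. c0 + (\<Sum>k\<in>{1..n}. w k * (if k \<in> S then 1 else 0)))
  = c0 * 2 ^ n + (\<Sum>k\<in>{1..n}. w k) * (2 ^ n / 2 :: complex)"
proof -
  have "(\<Sum>S\<in>Pow {1..n}. c0 + (\<Sum>k\<in>{1..n}. w k * (if k \<in> S then 1 else 0)))
     = c0 * (\<Sum>S\<in>Pow {1..n}. 1) + (\<Sum>k\<in>{1..n}. w k * (\<Sum>S\<in>Pow {1..n}. if k \<in> S then 1 else 0))"
    by (simp add: sum.distrib sum_distrib_left) (rule sum.swap)
  also have "\<dots> = c0 * 2 ^ n + (\<Sum>k\<in>{1..n}. w k * (2 ^ n / 2))"
  proof -
    have "(\<Sum>k\<in>{1..n}. w k * (\<Sum>S\<in>Pow {1..n}. if k \<in> S then 1 else 0)) = (\<Sum>k\<in>{1..n}. w k * (2 ^ n / 2))"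
    proof (rule sum.cong[OF refl])
      fix k assume k: "k \<in> {1..n}"
      show "w k * (\<Sum>S\<in>Pow {1..n}. if k \<in> S then 1 else 0) = w k * (2 ^ n / 2)" unfolding sumP1[OF k] ..
    qed
    then show ?thesis unfolding sumP0 by simp
  qed
  finally show ?thesis by (simp add: sum_distrib_right)
qed

lemma sum_w: "(\<Sum>k\<in>{1..n}. 4 * g k k - 2 :: complex) = 4 * (\<Sum>k\<in>{1..n}. g k k) - 2 * of_nat n"
  by (simp add: sum_subtractf sum_distrib_left)

lemma fr_diag_R: "(\<Sum>S\<in>Pow {1..n}. f S * RR n g c0 S S)
   = (\<Sum>S\<in>Pow {1..n}. f S * (c0 + (\<Sum>k\<in>{1..n}. (4 * g k k - 2) * (if k \<in> S then 1 else 0))))"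
  by (rule sum.cong[OF refl]) (simp add: R_diag)

lemma fr_Eii_R: "i \<in> {1..n} \<Longrightarrow> c0 = of_nat n + 1 - 2 * (\<Sum>k\<in>{1..n}. g k k) \<Longrightarrow>
   fr n (EE n i i) (RR n g c0) = 2 ^ n * g i i"
proof -
  assume i: "i \<in> {1..n}" and c0: "c0 = of_nat n + 1 - 2 * (\<Sum>k\<in>{1..n}. g k k)"
  have "fr n (EE n i i) (RR n g c0) = (\<Sum>S\<in>Pow {1..n}. (if i \<in> S then 1 else 0) * RR n g c0 S S)"
    unfolding fr_def
  proof (rule sum.cong[OF refl])
    fix S assume S: "S \<in> Pow {1..n}"
    have "(\<Sum>T\<in>Pow {1..n}. cnj (EE n i i S T) * RR n g c0 S T)
       = (\<Sum>T\<in>Pow {1..n}. if T = S then (if i \<in> S then 1 else 0) * RR n g c0 S S else 0)"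
      using S by (intro sum.cong refl) (auto simp: E_diag)
    also have "\<dots> = (if i \<in> S then 1 else 0) * RR n g c0 S S" using S by simp
    finally show "(\<Sum>T\<in>Pow {1..n}. cnj (EE n i i S T) * RR n g c0 S T) = (if i \<in> S then 1 else 0) * RR n g c0 S S" .
  qed
  also have "\<dots> = c0 * (2 ^ n / 2) + (\<Sum>k\<in>{1..n}. 4 * g k k - 2) * (2 ^ n / 4) + (4 * g i i - 2) * (2 ^ n / 4)"
    unfolding fr_diag_R by (rule sum_lin1[OF i])
  also have "\<dots> = 2 ^ n * g i i" unfolding sum_w c0 by (simp add: field_simps)
  finally show ?thesis .
qed

lemma fr_fid_R: "c0 = of_nat n + 1 - 2 * (\<Sum>k\<in>{1..n}. g k k) \<Longrightarrow>
   fr n (fid n) (RR n g c0) = 2 ^ n"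
proof -
  assume c0: "c0 = of_nat n + 1 - 2 * (\<Sum>k\<in>{1..n}. g k k)"
  have "fr n (fid n) (RR n g c0) = (\<Sum>S\<in>Pow {1..n}. 1 * RR n g c0 S S)"
    unfolding fr_def
  proof (rule sum.cong[OF refl])
    fix S assume S: "S \<in> Pow {1..n}"
    have "(\<Sum>T\<in>Pow {1..n}. cnj (fid n S T) * RR n g c0 S T)
       = (\<Sum>T\<in>Pow {1..n}. if T = S then RR n g c0 S S else 0)"
      using S by (intro sum.cong refl) (auto simp: fid_def)
    also have "\<dots> = 1 * RR n g c0 S S" using S by simp
    finally show "(\<Sum>T\<in>Pow {1..n}. cnj (fid n S T) * RR n g c0 S T) = 1 * RR n g c0 S S" .
  qed
  also have "\<dots> = (\<Sum>S\<in>Pow {1..n}. c0 + (\<Sum>k\<in>{1..n}. (4 * g k k - 2) * (if k \<in> S then 1 else 0)))"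
    unfolding fr_diag_R by simp
  also have "\<dots> = c0 * 2 ^ n + (\<Sum>k\<in>{1..n}. 4 * g k k - 2) * (2 ^ n / 2)" by (rule sum_lin0)
  also have "\<dots> = 2 ^ n" unfolding sum_w c0 by (simp add: field_simps)
  finally show ?thesis .
qed



lemma rho_fock: "density_matrix n \<rho> \<Longrightarrow> \<rho> S T \<noteq> 0 \<Longrightarrow> S \<subseteq> {1..n} \<and> T \<subseteq> {1..n}"
  unfolding density_matrix_def fock_op_def by blast

lemma mult_numop: "fmult n X (numop n) S T = (if T \<subseteq> {1..n} then X S T * of_nat (card T) else 0)"
proof -
  have "fmult n X (numop n) S T = (\<Sum>U\<in>Pow {1..n}. if U = T then (if T \<subseteq> {1..n} then X S T * of_nat (card T) else 0) else 0)"
    unfolding fmult_def by (intro sum.cong refl) (auto simp: numop_formula)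
  also have "\<dots> = (if T \<subseteq> {1..n} then X S T * of_nat (card T) else 0)" by simp
  finally show ?thesis .
qed

lemma numop_mult: "fmult n (numop n) X S T = (if S \<subseteq> {1..n} then of_nat (card S) * X S T else 0)"
proof -
  have "fmult n (numop n) X S T = (\<Sum>U\<in>Pow {1..n}. if U = S then (if S \<subseteq> {1..n} then of_nat (card S) * X S T else 0) else 0)"
    unfolding fmult_def by (intro sum.cong refl) (auto simp: numop_formula)
  also have "\<dots> = (if S \<subseteq> {1..n} then of_nat (card S) * X S T else 0)" by (simp add: sum.delta')
  finally show ?thesis .
qed

lemma rho_card: "density_matrix n \<rho> \<Longrightarrow> fmult n \<rho> (numop n) = fmult n (numop n) \<rho> \<Longrightarrow>
   \<rho> S T \<noteq> 0 \<Longrightarrow> card S = card T"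
proof -
  assume d: "density_matrix n \<rho>" and c: "fmult n \<rho> (numop n) = fmult n (numop n) \<rho>" and r: "\<rho> S T \<noteq> 0"
  from rho_fock[OF d r] have ST: "S \<subseteq> {1..n}" "T \<subseteq> {1..n}" by auto
  have "fmult n \<rho> (numop n) S T = fmult n (numop n) \<rho> S T" using c by simp
  then have "\<rho> S T * of_nat (card T) = of_nat (card S) * \<rho> S T" unfolding mult_numop numop_mult using ST by simp
  then have "(of_nat (card T) :: complex) = of_nat (card S)" using r by (simp add: mult.commute)
  then show ?thesis by simp
qed

lemma gamma_fr: "ftr n (fmult n \<rho> (EE n j i)) = fr n (EE n i j) \<rho>"
  unfolding ftr_def fr_def fmult_def[of n \<rho>]
proof (rule sum.cong[OF refl], rule sum.cong[OF refl])
  fix S U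
  show "\<rho> S U * EE n j i U S = cnj (EE n i j S U) * \<rho> S U"
    using E_sym[of n j i U S] E_real[of n i j S U] by (simp add: mult.commute)
qed

lemma fr_fid_rho: "density_matrix n \<rho> \<Longrightarrow> fr n (fid n) \<rho> = 1"
proof -
  assume d: "density_matrix n \<rho>"
  have "fr n (fid n) \<rho> = ftr n \<rho>"
    unfolding fr_def ftr_def
  proof (rule sum.cong[OF refl])
    fix S assume S: "S \<in> Pow {1..n}"
    have "(\<Sum>T\<in>Pow {1..n}. cnj (fid n S T) * \<rho> S T) = (\<Sum>T\<in>Pow {1..n}. if T = S then \<rho> S S else 0)"
      using S by (intro sum.cong refl) (auto simp: fid_def)
    then show "(\<Sum>T\<in>Pow {1..n}. cnj (fid n S T) * \<rho> S T) = \<rho> S S" using S by simp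
  qed
  then show ?thesis using d by (simp add: density_matrix_def)
qed

lemma fr_cc_zero: "(\<And>S T. X S T \<noteq> 0 \<Longrightarrow> card S = card T) \<Longrightarrow> fr n (fmult n (cre n i) (cre n j)) X = 0"
proof (rule fr_zero)
  fix S T assume h: "\<And>S T. X S T \<noteq> 0 \<Longrightarrow> card S = card T"
  show "cnj (fmult n (cre n i) (cre n j) S T) * X S T = 0"
  proof (cases "fmult n (cre n i) (cre n j) S T = 0")
    case False
    then have "card S = card T + 2" by (rule cc_card)
    then have "X S T = 0" using h by force
    then show ?thesis by simp
  qed simp
qed

lemma fr_aa_zero: "(\<And>S T. X S T \<noteq> 0 \<Longrightarrow> card S = card T) \<Longrightarrow> fr n (fmult n (ann n i) (ann n j)) X = 0"
proof (rule fr_zero)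
  fix S T assume h: "\<And>S T. X S T \<noteq> 0 \<Longrightarrow> card S = card T"
  show "cnj (fmult n (ann n i) (ann n j) S T) * X S T = 0"
  proof (cases "fmult n (ann n i) (ann n j) S T = 0")
    case False
    then have "card T = card S + 2" by (rule aa_card)
    then have "X S T = 0" using h by force
    then show ?thesis by simp
  qed simp
qed

lemma E_out: "\<not> (i \<in> {1..n} \<and> j \<in> {1..n}) \<Longrightarrow> EE n i j S T = 0"
  using E_nz by blast

lemma fr_O1: "fr n (\<lambda>S T. a * fid n S T
             + (\<Sum>i\<in>{1..n}. \<Sum>j\<in>{1..n}. b i j * fmult n (cre n i) (ann n j) S T)
             + (\<Sum>i\<in>{1..n}. \<Sum>j\<in>{1..n}. d i j * fmult n (cre n i) (cre n j) S T)
             + (\<Sum>i\<in>{1..n}. \<Sum>j\<in>{1..n}. e i j * fmult n (ann n i) (ann n j) S T)) X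
  = cnj a * fr n (fid n) X
    + (\<Sum>i\<in>{1..n}. \<Sum>j\<in>{1..n}. cnj (b i j) * fr n (fmult n (cre n i) (ann n j)) X)
    + (\<Sum>i\<in>{1..n}. \<Sum>j\<in>{1..n}. cnj (d i j) * fr n (fmult n (cre n i) (cre n j)) X)
    + (\<Sum>i\<in>{1..n}. \<Sum>j\<in>{1..n}. cnj (e i j) * fr n (fmult n (ann n i) (ann n j)) X)"
  by (simp only: fr_add fr_scale fr_sum)



lemma O1_diff: "x \<in> O1 n \<Longrightarrow> y \<in> O1 n \<Longrightarrow> (\<lambda>S T. x S T - y S T) \<in> O1 n"
proof -
  assume "x \<in> O1 n" "y \<in> O1 n"
  then obtain a b d e a' b' d' e' where
    x: "x = (\<lambda>S T. a * fid n S T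
             + (\<Sum>i\<in>{1..n}. \<Sum>j\<in>{1..n}. b i j * fmult n (cre n i) (ann n j) S T)
             + (\<Sum>i\<in>{1..n}. \<Sum>j\<in>{1..n}. d i j * fmult n (cre n i) (cre n j) S T)
             + (\<Sum>i\<in>{1..n}. \<Sum>j\<in>{1..n}. e i j * fmult n (ann n i) (ann n j) S T))" and
    y: "y = (\<lambda>S T. a' * fid n S T
             + (\<Sum>i\<in>{1..n}. \<Sum>j\<in>{1..n}. b' i j * fmult n (cre n i) (ann n j) S T)
             + (\<Sum>i\<in>{1..n}. \<Sum>j\<in>{1..n}. d' i j * fmult n (cre n i) (cre n j) S T)
             + (\<Sum>i\<in>{1..n}. \<Sum>j\<in>{1..n}. e' i j * fmult n (ann n i) (ann n j) S T))"
    unfolding O1_def by blast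
  have "(\<lambda>S T. x S T - y S T) = (\<lambda>S T. (a - a') * fid n S T
             + (\<Sum>i\<in>{1..n}. \<Sum>j\<in>{1..n}. (b i j - b' i j) * fmult n (cre n i) (ann n j) S T)
             + (\<Sum>i\<in>{1..n}. \<Sum>j\<in>{1..n}. (d i j - d' i j) * fmult n (cre n i) (cre n j) S T)
             + (\<Sum>i\<in>{1..n}. \<Sum>j\<in>{1..n}. (e i j - e' i j) * fmult n (ann n i) (ann n j) S T))"
    (is "_ = ?r") unfolding x y by (simp add: left_diff_distrib sum_subtractf algebra_simps)
  then show ?thesis unfolding O1_def
    by (intro CollectI exI[of _ "a - a'"] exI[of _ "\<lambda>i j. b i j - b' i j"] exI[of _ "\<lambda>i j. d i j - d' i j"]
        exI[of _ "\<lambda>i j. e i j - e' i j"] conjI TrueI)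
qed

lemma O1_fock: "x \<in> O1 n \<Longrightarrow> \<not> (S \<subseteq> {1..n} \<and> T \<subseteq> {1..n}) \<Longrightarrow> x S T = 0"
proof -
  assume x1: "x \<in> O1 n" and ST: "\<not> (S \<subseteq> {1..n} \<and> T \<subseteq> {1..n})"
  have z1: "fid n S T = 0" using ST by (auto simp: fid_def)
  have z2: "EE n i j S T = 0" for i j using E_nz[of n i j S T] ST by blast
  have z3: "fmult n (cre n i) (cre n j) S T = 0" for i j using cc_fock[of n i j S T] ST by blast
  have z4: "fmult n (ann n i) (ann n j) S T = 0" for i j using aa_fock[of n i j S T] ST by blast
  from x1 obtain a b d e where "x = (\<lambda>S T. a * fid n S T
             + (\<Sum>i\<in>{1..n}. \<Sum>j\<in>{1..n}. b i j * fmult n (cre n i) (ann n j) S T)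
             + (\<Sum>i\<in>{1..n}. \<Sum>j\<in>{1..n}. d i j * fmult n (cre n i) (cre n j) S T)
             + (\<Sum>i\<in>{1..n}. \<Sum>j\<in>{1..n}. e i j * fmult n (ann n i) (ann n j) S T))"
    unfolding O1_def by blast
  then show ?thesis by (simp add: z1 z2 z3 z4)
qed

lemma cnj_mult_self: "cnj z * z = complex_of_real ((cmod z)\<^sup>2)"
  by (subst complex_norm_square) (rule mult.commute)

lemma fr_self_zero: "fr n D D = 0 \<Longrightarrow> S \<in> Pow {1..n} \<Longrightarrow> T \<in> Pow {1..n} \<Longrightarrow> D S T = 0"
proof -
  assume z: "fr n D D = 0" and S: "S \<in> Pow {1..n}" and T: "T \<in> Pow {1..n}"
  have "fr n D D = complex_of_real (\<Sum>S\<in>Pow {1..n}. \<Sum>T\<in>Pow {1..n}. (cmod (D S T))\<^sup>2)"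
    unfolding fr_def cnj_mult_self by simp
  then have r: "(\<Sum>S\<in>Pow {1..n}. \<Sum>T\<in>Pow {1..n}. (cmod (D S T))\<^sup>2) = 0" using z by (metis of_real_eq_0_iff)
  have "\<forall>S\<in>Pow {1..n}. (\<Sum>T\<in>Pow {1..n}. (cmod (D S T))\<^sup>2) = 0"
    using r by (subst (asm) sum_nonneg_eq_0_iff) (auto intro: sum_nonneg)
  then have "(\<Sum>T\<in>Pow {1..n}. (cmod (D S T))\<^sup>2) = 0" using S by blast
  then have "\<forall>T\<in>Pow {1..n}. (cmod (D S T))\<^sup>2 = 0"
    by (subst (asm) sum_nonneg_eq_0_iff) auto
  then show ?thesis using T by auto
qed



lemma P_O1: "(\<lambda>S T. RR n g c0 S T / 2 ^ n) \<in> O1 n"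
proof -
  let ?b = "\<lambda>i j. (4 * g i j - (if i = j then 2 else 0)) / 2 ^ n"
  have pw: "RR n g c0 S T / 2 ^ n = c0 / 2 ^ n * fid n S T
             + (\<Sum>i\<in>{1..n}. \<Sum>j\<in>{1..n}. ?b i j * fmult n (cre n i) (ann n j) S T)
             + (\<Sum>i\<in>{1..n}. \<Sum>j\<in>{1..n}. 0 * fmult n (cre n i) (cre n j) S T)
             + (\<Sum>i\<in>{1..n}. \<Sum>j\<in>{1..n}. 0 * fmult n (ann n i) (ann n j) S T)" for S T
  proof -
    have inner: "(\<Sum>j\<in>{1..n}. ?b i j * EE n i j S T)
       = (4 * (\<Sum>j\<in>{1..n}. g i j * EE n i j S T) - 2 * EE n i i S T) / 2 ^ n" if i: "i \<in> {1..n}" for i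
    proof -
      have "(\<Sum>j\<in>{1..n}. ?b i j * EE n i j S T)
          = (\<Sum>j\<in>{1..n}. (4 * (g i j * EE n i j S T) - (if i = j then 2 * EE n i j S T else 0)) / 2 ^ n)"
        by (intro sum.cong refl) (simp add: algebra_simps)
      also have "\<dots> = (4 * (\<Sum>j\<in>{1..n}. g i j * EE n i j S T) - 2 * EE n i i S T) / 2 ^ n"
        using i by (simp add: sum_divide_distrib[symmetric] sum_subtractf sum_distrib_left)
      finally show ?thesis .
    qed
    have "(\<Sum>i\<in>{1..n}. \<Sum>j\<in>{1..n}. ?b i j * EE n i j S T)
       = (\<Sum>i\<in>{1..n}. (4 * (\<Sum>j\<in>{1..n}. g i j * EE n i j S T) - 2 * EE n i i S T) / 2 ^ n)"
      by (rule sum.cong[OF refl]) (rule inner)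
    also have "\<dots> = (4 * (\<Sum>i\<in>{1..n}. \<Sum>j\<in>{1..n}. g i j * EE n i j S T) - 2 * numop n S T) / 2 ^ n"
      by (simp add: numop_def sum_divide_distrib[symmetric] sum_subtractf sum_distrib_left)
    finally show ?thesis by (simp add: RR_def field_simps)
  qed
  show ?thesis unfolding O1_def
    by (intro CollectI exI[of _ "c0 / 2 ^ n"] exI[of _ ?b] exI[of _ "\<lambda>i j. 0"] conjI TrueI) (simp only: pw)
qed

theorem corollary1p2:
  fixes n :: nat and \<rho> :: fop
  assumes "density_matrix n \<rho>"
    and "fmult n \<rho> (numop n) = fmult n (numop n) \<rho>"
  shows "(let \<gamma> = (\<lambda>i j. ftr n (fmult n \<rho> (fmult n (cre n j) (ann n i))));
              trg = (\<Sum>i\<in>{1..n}. \<gamma> i i)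
          in (\<lambda>S T. 2 ^ n * orth_proj n (O1 n) \<rho> S T)
           = (\<lambda>S T. (of_nat n + 1 - 2 * trg) * fid n S T - 2 * numop n S T
               + 4 * (\<Sum>i\<in>{1..n}. \<Sum>j\<in>{1..n}. \<gamma> i j * fmult n (cre n i) (ann n j) S T)))"
proof -
  note d = assms(1) and c = assms(2)
  define g where "g = (\<lambda>i j. ftr n (fmult n \<rho> (fmult n (cre n j) (ann n i))))"
  define c0 where "c0 = of_nat n + 1 - 2 * (\<Sum>i\<in>{1..n}. g i i)"
  define P where "P = (\<lambda>S T. RR n g c0 S T / 2 ^ n)"
  define X where "X = (\<lambda>S T. \<rho> S T - P S T)"
  have gfr: "g i j = fr n (EE n i j) \<rho>" for i j unfolding g_def by (rule gamma_fr)
  have Xcard: "X S T \<noteq> 0 \<Longrightarrow> card S = card T" for S T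
  proof -
    assume "X S T \<noteq> 0"
    then have "\<rho> S T \<noteq> 0 \<or> RR n g c0 S T \<noteq> 0" unfolding X_def P_def by auto
    then show ?thesis using rho_card[OF d c] R_card by blast
  qed
  have frX: "fr n A X = fr n A \<rho> - fr n A (RR n g c0) / 2 ^ n" for A
    unfolding X_def P_def fr_diff2 fr_div2 ..
  have z_fid: "fr n (fid n) X = 0"
  proof -
    have "fr n (fid n) (RR n g c0) = 2 ^ n" by (rule fr_fid_R) (simp add: c0_def)
    then show ?thesis unfolding frX fr_fid_rho[OF d] by simp
  qed
  have z_E: "fr n (EE n i j) X = 0" for i j
  proof (cases "i \<in> {1..n} \<and> j \<in> {1..n}")
    case True
    then have i: "i \<in> {1..n}" and j: "j \<in> {1..n}" by auto
    show ?thesis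
    proof (cases "i = j")
      case True
      have "fr n (EE n i i) (RR n g c0) = 2 ^ n * g i i" by (rule fr_Eii_R[OF i]) (simp add: c0_def)
      then show ?thesis unfolding frX using True gfr[of i i] by simp
    next
      case False
      show ?thesis unfolding frX using fr_E_R[OF i j False] gfr[of i j] by simp
    qed
  next
    case False
    then show ?thesis by (intro fr_zero) (simp add: E_out)
  qed
  have z_cc: "fr n (fmult n (cre n i) (cre n j)) X = 0" for i j by (rule fr_cc_zero) (rule Xcard)
  have z_aa: "fr n (fmult n (ann n i) (ann n j)) X = 0" for i j by (rule fr_aa_zero) (rule Xcard)
  have orth: "hs_inner n y (\<lambda>S T. \<rho> S T - P S T) = 0" if y: "y \<in> O1 n" for y
  proof -
    from y obtain a b d e where yd: "y = (\<lambda>S T. a * fid n S T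
             + (\<Sum>i\<in>{1..n}. \<Sum>j\<in>{1..n}. b i j * fmult n (cre n i) (ann n j) S T)
             + (\<Sum>i\<in>{1..n}. \<Sum>j\<in>{1..n}. d i j * fmult n (cre n i) (cre n j) S T)
             + (\<Sum>i\<in>{1..n}. \<Sum>j\<in>{1..n}. e i j * fmult n (ann n i) (ann n j) S T))"
      unfolding O1_def by blast
    show ?thesis unfolding hs_fr X_def[symmetric] yd fr_O1 z_fid z_E z_cc z_aa by simp
  qed
  have PO1: "P \<in> O1 n" unfolding P_def by (rule P_O1)
  have uniq: "p = P" if p: "p \<in> O1 n \<and> (\<forall>y\<in>O1 n. hs_inner n y (\<lambda>S T. \<rho> S T - p S T) = 0)" for p
  proof -
    define D where "D = (\<lambda>S T. p S T - P S T)"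
    have DO1: "D \<in> O1 n" unfolding D_def using p PO1 by (rule O1_diff[OF conjunct1])
    have "fr n D (\<lambda>S T. \<rho> S T - P S T) = 0" using orth[OF DO1] by (simp add: hs_fr)
    moreover have "fr n D (\<lambda>S T. \<rho> S T - p S T) = 0" using p DO1 by (simp add: hs_fr)
    ultimately have "fr n D (\<lambda>S T. (\<rho> S T - P S T) - (\<rho> S T - p S T)) = 0"
      unfolding fr_diff2 by simp
    then have "fr n D D = 0" unfolding D_def by simp
    then have DZ: "D S T = 0" for S T
    proof (cases "S \<subseteq> {1..n} \<and> T \<subseteq> {1..n}")
      case True
      then show ?thesis using fr_self_zero[OF \<open>fr n D D = 0\<close>] by blast
    next
      case False
      then show ?thesis using O1_fock[OF DO1] by blast
    qed
    show ?thesis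
    proof (rule ext, rule ext)
      fix S T show "p S T = P S T" using DZ[of S T] unfolding D_def by simp
    qed
  qed
  have op: "orth_proj n (O1 n) \<rho> = P"
    unfolding orth_proj_def
  proof (rule the_equality)
    show "P \<in> O1 n \<and> (\<forall>y\<in>O1 n. hs_inner n y (\<lambda>S T. \<rho> S T - P S T) = 0)" using PO1 orth by blast
  next
    fix p assume "p \<in> O1 n \<and> (\<forall>y\<in>O1 n. hs_inner n y (\<lambda>S T. \<rho> S T - p S T) = 0)"
    then show "p = P" by (rule uniq)
  qed
  show ?thesis unfolding Let_def op g_def[symmetric] c0_def[symmetric]
    by (simp add: P_def RR_def)
qed


end
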